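(* Let $f:\mathbb{R}^d\to\mathbb{R}$ be $\mu$-strongly convex and $L$-smooth (i.e. $\nabla f$ is $L$-Lipschitz), with minimum value $f_\ast$. Let $\theta_0\in\mathbb{R}^d$ be fixed and define iterates $\theta_{t+1}=\theta_t-\alpha\,(\gamma_t\odot g_t)$ with $\alpha=1/L$, where $g_t$ is a random vector satisfying, conditionally on the history $\theta_0,\dots,\theta_t$, $\mathbf{E}[g_t\mid\theta_t]=\nabla f(\theta_t)$ and $\mathbf{var}[g_{t,i}\mid\theta_t]=\sigma_{t,i}^2<\infty$, and where the (idealized) variance adaptation factors are $$\gamma_{t,i}=\frac{\nabla f(\theta_t)_i^2}{\nabla f(\theta_t)_i^2+\sigma_{t,i}^2}$$ (with $\gamma_{t,i}:=0$ if the denominator vanishes). Assume there are constants $c_v,M_v>0$ such that for all $t$, $\sum_{i=1}^d\sigma_{t,i}^2\le c_v\|\nabla f(\theta_t)\|^2+M_v$. Then $\mathbf{E}[f(\theta_t)-f_\ast]\in\mathcal{O}(1/t)$ as $t\to\infty$.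
   Context: $\odot$ denotes element-wise multiplication; $\|\cdot\|$ is the Euclidean norm; $x_i$ denotes the $i$-th coordinate of a vector $x$. *)

theory Defs
  imports "HOL-Probability.Probability" "HOL-Library.Landau_Symbols"
begin

definition strongly_convex :: "real \<Rightarrow> ('v::real_normed_vector \<Rightarrow> real) \<Rightarrow> bool" where
  "strongly_convex \<mu> f \<longleftrightarrow>
     (\<forall>x y u. 0 \<le> u \<longrightarrow> u \<le> 1 \<longrightarrow>
        f (u *\<^sub>R x + (1 - u) *\<^sub>R y) \<le> u * f x + (1 - u) * f y - \<mu> / 2 * u * (1 - u) * (norm (x - y))\<^sup>2)"

definition vadapt :: "real \<Rightarrow> real \<Rightarrow> real" where
  "vadapt a s = (if a\<^sup>2 + s = 0 then 0 else a\<^sup>2 / (a\<^sup>2 + s))"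

definition hist_alg :: "'a measure \<Rightarrow> (nat \<Rightarrow> 'a \<Rightarrow> 'b::topological_space) \<Rightarrow> nat \<Rightarrow> 'a measure" where
  "hist_alg M X t = sigma (space M) (\<Union>s\<in>{..t}. {X s -` B \<inter> space M | B. B \<in> sets borel})"

end

theory Submission
  imports Defs
begin

lemma line_deriv:
  fixes f :: "'v::real_inner \<Rightarrow> real"
  assumes grad: "\<And>x. (f has_derivative (\<lambda>h. Df x \<bullet> h)) (at x)"
  shows "((\<lambda>s. f (x + s *\<^sub>R h)) has_real_derivative (Df (x + s *\<^sub>R h) \<bullet> h)) (at s)"
proof -
  have "((\<lambda>s. x + s *\<^sub>R h) has_derivative (\<lambda>d. d *\<^sub>R h)) (at s)"
    by (auto intro!: derivative_eq_intros)
  from has_derivative_compose[OF this grad]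
  have "((\<lambda>s. f (x + s *\<^sub>R h)) has_derivative (\<lambda>d. Df (x + s *\<^sub>R h) \<bullet> (d *\<^sub>R h))) (at s)" .
  moreover have "(\<lambda>d. Df (x + s *\<^sub>R h) \<bullet> (d *\<^sub>R h)) = (*) (Df (x + s *\<^sub>R h) \<bullet> h)"
    by (auto simp: inner_scaleR_right)
  ultimately show ?thesis unfolding has_field_derivative_def by simp
qed

lemma descent:
  fixes f :: "'v::real_inner \<Rightarrow> real"
  assumes grad: "\<And>x. (f has_derivative (\<lambda>h. Df x \<bullet> h)) (at x)"
    and smooth: "\<And>x y. norm (Df x - Df y) \<le> L * norm (x - y)"
  shows "f y \<le> f x + Df x \<bullet> (y - x) + L / 2 * (norm (y - x))\<^sup>2"
proof -
  define h where "h = y - x"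
  define \<psi> where "\<psi> s = f (x + s *\<^sub>R h) - s * (Df x \<bullet> h) - L/2 * s\<^sup>2 * (norm h)\<^sup>2" for s
  have d: "(\<psi> has_real_derivative (Df (x + s *\<^sub>R h) \<bullet> h - Df x \<bullet> h - L * s * (norm h)\<^sup>2)) (at s)" for s
    unfolding \<psi>_def
    by (rule derivative_eq_intros line_deriv[OF grad] refl | simp)+
  have "\<psi> 1 \<le> \<psi> 0"
  proof (rule DERIV_nonpos_imp_nonincreasing[of 0 1])
    fix s :: real assume s: "0 \<le> s" "s \<le> 1"
    have "Df (x + s *\<^sub>R h) \<bullet> h - Df x \<bullet> h = (Df (x + s *\<^sub>R h) - Df x) \<bullet> h"
      by (simp add: inner_diff_left)
    also have "\<dots> \<le> norm (Df (x + s *\<^sub>R h) - Df x) * norm h" by (rule norm_cauchy_schwarz)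
    also have "\<dots> \<le> L * norm (s *\<^sub>R h) * norm h"
      using smooth[of "x + s *\<^sub>R h" x] by (simp add: mult_right_mono)
    also have "\<dots> = L * s * (norm h)\<^sup>2" using s by (simp add: power2_eq_square)
    finally show "\<exists>y. (\<psi> has_real_derivative y) (at s) \<and> y \<le> 0"
      using d[of s] by (intro exI[of _ "Df (x + s *\<^sub>R h) \<bullet> h - Df x \<bullet> h - L * s * (norm h)\<^sup>2"]) auto
  qed simp
  then show ?thesis unfolding \<psi>_def h_def by simp
qed

lemma sc_first:
  fixes f :: "'v::real_inner \<Rightarrow> real"
  assumes grad: "\<And>x. (f has_derivative (\<lambda>h. Df x \<bullet> h)) (at x)"
    and sconv: "strongly_convex \<mu> f"
  shows "f x + Df x \<bullet> (y - x) + \<mu> / 2 * (norm (y - x))\<^sup>2 \<le> f y"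
proof -
  define h where "h = y - x"
  have D: "((\<lambda>s. f (x + s *\<^sub>R h)) has_real_derivative (Df x \<bullet> h)) (at 0)"
    using line_deriv[OF grad, of x h 0] by simp
  then have lim: "((\<lambda>u. (f (x + u *\<^sub>R h) - f x) / u) \<longlongrightarrow> Df x \<bullet> h) (at_right 0)"
    unfolding has_field_derivative_iff by (auto intro: tendsto_mono at_le)
  have lim2: "((\<lambda>u. f y - f x - \<mu> / 2 * (1 - u) * (norm h)\<^sup>2) \<longlongrightarrow> f y - f x - \<mu> / 2 * (1 - 0) * (norm h)\<^sup>2) (at_right 0)"
    by (intro tendsto_intros)
  have ev: "eventually (\<lambda>u. (f (x + u *\<^sub>R h) - f x) / u \<le> f y - f x - \<mu> / 2 * (1 - u) * (norm h)\<^sup>2) (at_right (0::real))"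
  proof (rule eventually_mono[OF eventually_at_right_real[of 0 1]])
    fix u :: real assume "u \<in> {0<..<1}"
    then have u: "0 < u" "u < 1" by auto
    have "f (u *\<^sub>R y + (1 - u) *\<^sub>R x) \<le> u * f y + (1 - u) * f x - \<mu> / 2 * u * (1 - u) * (norm (y - x))\<^sup>2"
      using sconv u unfolding strongly_convex_def by auto
    moreover have "u *\<^sub>R y + (1 - u) *\<^sub>R x = x + u *\<^sub>R h" unfolding h_def by (simp add: algebra_simps)
    ultimately have "f (x + u *\<^sub>R h) - f x \<le> u * (f y - f x - \<mu> / 2 * (1 - u) * (norm h)\<^sup>2)"
      unfolding h_def by (simp add: algebra_simps)
    then show "(f (x + u *\<^sub>R h) - f x) / u \<le> f y - f x - \<mu> / 2 * (1 - u) * (norm h)\<^sup>2"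
      using u by (simp add: divide_le_eq mult.commute)
  qed simp
  have "Df x \<bullet> h \<le> f y - f x - \<mu> / 2 * (1 - 0) * (norm h)\<^sup>2"
    by (rule tendsto_le[OF trivial_limit_at_right_real lim2 lim ev])
  then show ?thesis unfolding h_def by simp
qed

lemma sq_bound: fixes \<mu> a t :: real assumes "\<mu> > 0" shows "a * t - \<mu>/2 * t\<^sup>2 \<le> a\<^sup>2 / (2*\<mu>)"
proof -
  have "0 \<le> (\<mu> * t - a)\<^sup>2 / (2*\<mu>)" using assms by simp
  also have "(\<mu> * t - a)\<^sup>2 / (2*\<mu>) = a\<^sup>2 / (2*\<mu>) - (a * t - \<mu>/2 * t\<^sup>2)"
    using assms by (simp add: field_simps power2_eq_square)
  finally show ?thesis by simp
qed

lemma sc_lower: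
  fixes f :: "'v::real_inner \<Rightarrow> real"
  assumes grad: "\<And>x. (f has_derivative (\<lambda>h. Df x \<bullet> h)) (at x)"
    and sconv: "strongly_convex \<mu> f" and mu: "\<mu> > 0"
  shows "f x - (norm (Df x))\<^sup>2 / (2*\<mu>) \<le> f y"
proof -
  have "- (Df x \<bullet> (y - x)) \<le> norm (Df x) * norm (y - x)"
    using norm_cauchy_schwarz[of "- Df x" "y - x"] by simp
  moreover have "norm (Df x) * norm (y - x) - \<mu>/2 * (norm (y - x))\<^sup>2 \<le> (norm (Df x))\<^sup>2 / (2*\<mu>)"
    by (rule sq_bound[OF mu])
  moreover note sc_first[OF grad sconv, of x y]
  ultimately show ?thesis by linarith
qed



lemma rec_bound:
  fixes e :: "nat \<Rightarrow> real"
  assumes nonneg: "\<And>t. e t \<ge> 0" and c: "c > 0" and K: "K \<ge> 0" and l0: "lam0 > 0"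
    and rec: "\<And>t l. 0 \<le> l \<Longrightarrow> l \<le> lam0 \<Longrightarrow> e (Suc t) \<le> (1 - c * l) * e t + K * l\<^sup>2"
  shows "e \<in> O(\<lambda>t. 1 / real t)"
proof -
  define \<beta> where "\<beta> = 2 / c"
  define T where "T = max 2 (\<beta> / lam0)"
  define C where "C = max (e 0 * T) (K * \<beta>\<^sup>2)"
  have \<beta>: "\<beta> > 0" using c by (simp add: \<beta>_def)
  have T2: "T \<ge> 2" and Tb: "T \<ge> \<beta> / lam0" by (auto simp: T_def)
  have C0: "C \<ge> 0" using nonneg[of 0] T2 by (auto simp: C_def intro: order.trans[OF _ max.cobounded1])
  have main: "e t \<le> C / (real t + T)" for t
  proof (induction t)
    case 0
    then show ?case using T2 by (simp add: C_def field_simps)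
  next
    case (Suc t)
    define s where "s = real t + T"
    have s2: "s \<ge> 2" using T2 by (simp add: s_def)
    define l where "l = \<beta> / s"
    have l0': "0 \<le> l" using \<beta> s2 by (simp add: l_def)
    have "\<beta> / s \<le> \<beta> / T" using \<beta> T2 by (intro divide_left_mono) (auto simp: s_def)
    also have "\<beta> / T \<le> lam0" using Tb l0 T2 by (simp add: divide_le_eq mult.commute pos_divide_le_eq)
    finally have ll: "l \<le> lam0" by (simp add: l_def)
    have cl: "c * l = 2 / s" using c by (simp add: l_def \<beta>_def)
    have "e (Suc t) \<le> (1 - c * l) * e t + K * l\<^sup>2" by (rule rec[OF l0' ll])
    also have "\<dots> \<le> (1 - 2 / s) * (C / s) + K * \<beta>\<^sup>2 / s\<^sup>2"
    proof -
      have "1 - 2 / s \<ge> 0" using s2 by (simp add: field_simps)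
      then have "(1 - 2 / s) * e t \<le> (1 - 2 / s) * (C / s)"
        using Suc.IH by (intro mult_left_mono) (auto simp: s_def)
      then show ?thesis unfolding cl by (simp add: l_def power_divide)
    qed
    also have "\<dots> \<le> (1 - 2 / s) * (C / s) + C / s\<^sup>2"
      using s2 by (intro add_left_mono divide_right_mono) (auto simp: C_def)
    also have "\<dots> = C / s - C / s\<^sup>2" using s2 by (simp add: field_simps power2_eq_square)
    also have "\<dots> \<le> C / (s + 1)"
    proof -
      have "C / s - C / (s + 1) = C / (s * (s + 1))" using s2 by (simp add: field_simps)
      also have "\<dots> \<le> C / s\<^sup>2" using s2 C0
        by (intro divide_left_mono) (auto simp: power2_eq_square)
      finally show ?thesis by simp
    qed
    finally show ?case by (simp add: s_def add.commute add.left_commute)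
  qed
  show ?thesis
  proof (rule bigoI[where c = C])
    show "eventually (\<lambda>t. norm (e t) \<le> C * norm (1 / real t)) at_top"
    proof (rule eventually_mono[OF eventually_ge_at_top[of 1]])
      fix t :: nat assume t: "t \<ge> 1"
      have "norm (e t) = e t" using nonneg[of t] by simp
      also have "\<dots> \<le> C / (real t + T)" by (rule main)
      also have "\<dots> \<le> C / real t" using t T2 C0 by (intro divide_left_mono) auto
      finally show "norm (e t) \<le> C * norm (1 / real t)" by simp
    qed
  qed
qed



lemma borel_measurable_vec_nth[measurable (raw)]:
  fixes f :: "'a \<Rightarrow> real^'n"
  assumes "f \<in> borel_measurable M"
  shows "(\<lambda>x. f x $ i) \<in> borel_measurable M"
proof -
  have "(\<lambda>x. f x $ i) = (\<lambda>x. f x \<bullet> axis i 1)" by (simp add: cart_eq_inner_axis)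
  moreover have "(\<lambda>x. f x \<bullet> axis i 1) \<in> borel_measurable M"
    by (rule borel_measurable_inner[OF assms borel_measurable_const])
  ultimately show ?thesis by metis
qed

lemma ax: "(x::real^'n) \<bullet> axis i 1 = x $ i" by (simp add: cart_eq_inner_axis)
lemma borel_measurable_vec_lambda:
  fixes h :: "'a \<Rightarrow> 'n::finite \<Rightarrow> real"
  assumes "\<And>i. (\<lambda>x. h x i) \<in> borel_measurable M"
  shows "(\<lambda>x. \<chi> i. h x i) \<in> borel_measurable M"
proof (rule borel_measurable_euclidean_space[THEN iffD2], intro ballI)
  fix b :: "real^'n" assume "b \<in> Basis"
  then obtain i where b: "b = axis i 1" unfolding Basis_vec_def by auto
  have "(\<lambda>x. (\<chi> i. h x i) \<bullet> b) = (\<lambda>x. h x i)" unfolding b ax by simp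
  then show "(\<lambda>x. (\<chi> i. h x i) \<bullet> b) \<in> borel_measurable M" using assms[of i] by (simp only:)
qed

lemma hist_space: "space (hist_alg M X t) = space M"
  unfolding hist_alg_def by (simp add: space_measure_of_conv)

lemma hist_sets: "sets (hist_alg M X t) = sigma_sets (space M) (\<Union>s\<in>{..t}. {X s -` B \<inter> space M | B. B \<in> sets borel})"
  unfolding hist_alg_def by (rule sets_measure_of) auto

lemma hist_sub:
  assumes "\<And>s. s \<le> t \<Longrightarrow> X s \<in> borel_measurable M"
  shows "subalgebra M (hist_alg M X t)"
  unfolding subalgebra_def hist_space hist_sets
proof (intro conjI refl sets.sigma_sets_subset)
  show "(\<Union>s\<in>{..t}. {X s -` B \<inter> space M | B. B \<in> sets borel}) \<subseteq> sets M"
    using assms by (auto intro: measurable_sets)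
qed

lemma hist_meas:
  assumes "s \<le> t"
  shows "X s \<in> borel_measurable (hist_alg M X t)"
proof (rule measurableI)
  fix B :: "'b set" assume "B \<in> sets borel"
  then have "X s -` B \<inter> space M \<in> (\<Union>s\<in>{..t}. {X s -` B \<inter> space M | B. B \<in> sets borel})"
    using assms by auto
  then show "X s -` B \<inter> space (hist_alg M X t) \<in> sets (hist_alg M X t)"
    unfolding hist_sets hist_space by (rule sigma_sets.Basic)
qed simp

lemma vadapt_eq: "vadapt a s = a\<^sup>2 / (a\<^sup>2 + s)"
  by (simp add: vadapt_def)

lemma vadapt_bounds: assumes "s \<ge> 0" shows "0 \<le> vadapt a s" "vadapt a s \<le> 1"
proof -
  have b: "a\<^sup>2 + s \<ge> 0" using assms by simp
  show "0 \<le> vadapt a s" using b by (simp add: vadapt_eq)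
  show "vadapt a s \<le> 1"
  proof (cases "a\<^sup>2 + s = 0")
    case False
    then have "a\<^sup>2 + s > 0" using b by simp
    then show ?thesis using assms by (simp add: vadapt_eq)
  qed (simp add: vadapt_eq)
qed

lemma vadapt_id: "(vadapt a s)\<^sup>2 * (a\<^sup>2 + s) = vadapt a s * a\<^sup>2"
  by (cases "a\<^sup>2 + s = 0") (auto simp: vadapt_eq power2_eq_square)

lemma vadapt_lower:
  assumes "s \<ge> 0"
  shows "2 * l * a\<^sup>2 - l\<^sup>2 * (a\<^sup>2 + s) \<le> vadapt a s * a\<^sup>2"
proof (cases "a\<^sup>2 + s = 0")
  case True
  then have "a = 0" "s = 0" using assms by (auto simp: add_nonneg_eq_0_iff)
  then show ?thesis by simp
next
  case False
  then have b: "a\<^sup>2 + s > 0" using assms by (metis add_nonneg_nonneg less_eq_real_def zero_le_power2)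
  have "0 \<le> (a\<^sup>2 - l * (a\<^sup>2 + s))\<^sup>2 / (a\<^sup>2 + s)" using b by simp
  also have "\<dots> = vadapt a s * a\<^sup>2 - (2 * l * a\<^sup>2 - l\<^sup>2 * (a\<^sup>2 + s))"
    using b by (simp add: vadapt_eq field_simps power2_eq_square)
  finally show ?thesis by simp
qed

lemma norm_sq_vec: "(norm (x :: real^'n))\<^sup>2 = (\<Sum>i\<in>UNIV. (x $ i)\<^sup>2)"
  by (simp only: power2_norm_eq_inner inner_vec_def) (simp add: power2_eq_square)

lemma norm_diff_sq_le: "(norm (a - b :: 'v::real_normed_vector))\<^sup>2 \<le> 2 * (norm a)\<^sup>2 + 2 * (norm b)\<^sup>2"
proof -
  have "norm (a - b) \<le> norm a + norm b" by (rule norm_triangle_ineq4)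
  then have "(norm (a - b))\<^sup>2 \<le> (norm a + norm b)\<^sup>2" using power_mono[OF _ norm_ge_zero, of "norm (a - b)" "norm a + norm b" 2] by simp
  also have "\<dots> \<le> 2 * (norm a)\<^sup>2 + 2 * (norm b)\<^sup>2"
    using power2_sum[of "norm a" "norm b"] power2_diff[of "norm a" "norm b"]
      zero_le_power2[of "norm a - norm b"] by linarith
  finally show ?thesis .
qed



lemma sq_le_2: fixes u a b :: real assumes "0 \<le> u" "u \<le> a + b" shows "u\<^sup>2 \<le> 2 * a\<^sup>2 + 2 * b\<^sup>2"
proof -
  have "u\<^sup>2 \<le> (a + b)\<^sup>2" using assms by (intro power_mono) auto
  also have "\<dots> \<le> 2 * a\<^sup>2 + 2 * b\<^sup>2"
    using power2_sum[of a b] power2_diff[of a b] zero_le_power2[of "a - b"] by linarith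
  finally show ?thesis .
qed

lemma abs_mul_le: fixes a b :: real shows "\<bar>a * b\<bar> \<le> a\<^sup>2 + b\<^sup>2"
proof -
  have "2 * (\<bar>a\<bar> * \<bar>b\<bar>) \<le> a\<^sup>2 + b\<^sup>2" using sum_squares_bound[of "\<bar>a\<bar>" "\<bar>b\<bar>"] by (simp add: mult.assoc)
  moreover have "\<bar>a * b\<bar> = \<bar>a\<bar> * \<bar>b\<bar>" by (simp add: abs_mult)
  moreover have "0 \<le> a\<^sup>2 + b\<^sup>2" by simp
  ultimately show ?thesis by linarith
qed

lemma G_sq_le: fixes G x :: real assumes "0 \<le> G" "G \<le> 1" shows "(G * x)\<^sup>2 \<le> x\<^sup>2" "G\<^sup>2 \<le> 1"
proof -
  show G2: "G\<^sup>2 \<le> 1" using assms by (simp add: power_le_one)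
  have "(G * x)\<^sup>2 = G\<^sup>2 * x\<^sup>2" by (simp add: power_mult_distrib)
  also have "\<dots> \<le> 1 * x\<^sup>2" by (rule mult_right_mono[OF G2]) simp
  finally show "(G * x)\<^sup>2 \<le> x\<^sup>2" by simp
qed

theorem theorem1:
  fixes M :: "'a measure"
    and f :: "real^'n \<Rightarrow> real"
    and Df :: "real^'n \<Rightarrow> real^'n"
    and \<mu> L cv Mv fstar :: real
    and \<theta>0 :: "real^'n"
    and \<theta> g \<sigma>2 :: "nat \<Rightarrow> 'a \<Rightarrow> real^'n"
  assumes prob: "prob_space M"
    and grad: "\<And>x. (f has_derivative (\<lambda>h. Df x \<bullet> h)) (at x)"
    and mu_pos: "\<mu> > 0"
    and sconv: "strongly_convex \<mu> f"
    and L_pos: "L > 0"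
    and smooth: "\<And>x y. norm (Df x - Df y) \<le> L * norm (x - y)"
    and fstar: "fstar = (INF x. f x)"
    and init: "\<And>\<omega>. \<theta> 0 \<omega> = \<theta>0"
    and step: "\<And>t \<omega>. \<theta> (Suc t) \<omega> =
        \<theta> t \<omega> - (1 / L) *\<^sub>R (\<chi> i. vadapt (Df (\<theta> t \<omega>) $ i) (\<sigma>2 t \<omega> $ i) * g t \<omega> $ i)"
    and g_meas: "\<And>t. g t \<in> borel_measurable M"
    and g_sq_int: "\<And>t i. integrable M (\<lambda>\<omega>. (g t \<omega> $ i)\<^sup>2)"
    and unbiased: "\<And>t i. AE \<omega> in M.
        real_cond_exp M (hist_alg M \<theta> t) (\<lambda>\<omega>. g t \<omega> $ i) \<omega> = Df (\<theta> t \<omega>) $ i"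
    and sigma_meas: "\<And>t. \<sigma>2 t \<in> borel_measurable (hist_alg M \<theta> t)"
    and sigma_var: "\<And>t i. AE \<omega> in M. \<sigma>2 t \<omega> $ i =
        real_cond_exp M (hist_alg M \<theta> t) (\<lambda>\<omega>. (g t \<omega> $ i - Df (\<theta> t \<omega>) $ i)\<^sup>2) \<omega>"
    and cv_pos: "cv > 0" and Mv_pos: "Mv > 0"
    and var_bound: "\<And>t. AE \<omega> in M. (\<Sum>i\<in>UNIV. \<sigma>2 t \<omega> $ i) \<le> cv * (norm (Df (\<theta> t \<omega>)))\<^sup>2 + Mv"
  shows "(\<forall>t. integrable M (\<lambda>\<omega>. f (\<theta> t \<omega>) - fstar)) \<and>
         (\<lambda>t. LINT \<omega>|M. f (\<theta> t \<omega>) - fstar) \<in> O(\<lambda>t. 1 / real t)"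
proof -
  interpret P: prob_space M by (rule prob)
  define F where "F t = hist_alg M \<theta> t" for t
  have Dcont: "continuous_on UNIV Df"
  proof -
    have "L-lipschitz_on UNIV Df"
      by (rule lipschitz_onI) (use smooth L_pos in \<open>auto simp: dist_norm\<close>)
    then show ?thesis by (rule lipschitz_on_continuous_on)
  qed
  have fcont: "continuous_on UNIV f"
    by (rule continuous_at_imp_continuous_on) (use grad has_derivative_continuous in blast)
  have Df_b: "Df \<in> borel_measurable borel" by (rule borel_measurable_continuous_onI[OF Dcont])
  have f_b: "f \<in> borel_measurable borel" by (rule borel_measurable_continuous_onI[OF fcont])
  note [measurable] = Df_b f_b g_meas
  define D where "D t \<omega> = Df (\<theta> t \<omega>)" for t \<omega>
  define G where "G t \<omega> i = vadapt (D t \<omega> $ i) (\<sigma>2 t \<omega> $ i)" for t \<omega> i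
  define v where "v t \<omega> = (\<chi> i. G t \<omega> i * g t \<omega> $ i)" for t \<omega>
  have step': "\<theta> (Suc t) \<omega> = \<theta> t \<omega> - (1 / L) *\<^sub>R v t \<omega>" for t \<omega>
    unfolding v_def G_def D_def by (rule step)
  have vmeas: "v t \<in> borel_measurable N"
    if "\<theta> t \<in> borel_measurable N" "\<sigma>2 t \<in> borel_measurable N" "g t \<in> borel_measurable N" for t N
    unfolding v_def G_def D_def vadapt_eq
    by (rule borel_measurable_vec_lambda) (use that in measurable)
  have \<theta>m_all: "\<forall>s\<le>t. \<theta> s \<in> borel_measurable M" for t
  proof (induction t)
    case 0
    have "\<theta> 0 = (\<lambda>\<omega>. \<theta>0)" using init by (intro ext) simp
    then show ?case by simp
  next
    case (Suc t)
    have sub: "subalgebra M (F t)" unfolding F_def using Suc by (intro hist_sub) auto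
    have s: "\<sigma>2 t \<in> borel_measurable M"
      using measurable_from_subalg[OF sub sigma_meas[of t, folded F_def]] .
    have th: "\<theta> t \<in> borel_measurable M" using Suc by auto
    have "\<theta> (Suc t) = (\<lambda>\<omega>. \<theta> t \<omega> - (1 / L) *\<^sub>R v t \<omega>)" by (intro ext step')
    moreover have "v t \<in> borel_measurable M" using vmeas th s g_meas by blast
    ultimately have "\<theta> (Suc t) \<in> borel_measurable M" using th by simp
    then show ?case using Suc by (auto simp: le_Suc_eq)
  qed
  have \<theta>m[measurable]: "\<theta> t \<in> borel_measurable M" for t using \<theta>m_all by auto
  have sub: "subalgebra M (F t)" for t unfolding F_def by (rule hist_sub) (use \<theta>m in auto)
  have sfs: "sigma_finite_subalgebra M (F t)" for t
    by (rule finite_measure_subalgebra_is_sigma_finite)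
       (unfold finite_measure_subalgebra_def finite_measure_subalgebra_axioms_def, use P.finite_measure_axioms sub in auto)
  have \<theta>F: "\<theta> t \<in> borel_measurable (F t)" for t unfolding F_def by (rule hist_meas) simp
  have \<sigma>F: "\<sigma>2 t \<in> borel_measurable (F t)" for t unfolding F_def by (rule sigma_meas)
  have \<sigma>M[measurable]: "\<sigma>2 t \<in> borel_measurable M" for t by (rule measurable_from_subalg[OF sub \<sigma>F])
  have DF: "(\<lambda>\<omega>. D t \<omega> $ i) \<in> borel_measurable (F t)" for t i
    unfolding D_def using \<theta>F[of t] by measurable
  have GF: "(\<lambda>\<omega>. G t \<omega> i) \<in> borel_measurable (F t)" for t i
    unfolding G_def D_def vadapt_eq using \<theta>F[of t] \<sigma>F[of t] by measurable
  have DM[measurable]: "(\<lambda>\<omega>. D t \<omega> $ i) \<in> borel_measurable M" for t i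
    by (rule measurable_from_subalg[OF sub DF])
  have DM'[measurable]: "D t \<in> borel_measurable M" for t
    unfolding D_def by measurable
  have GM[measurable]: "(\<lambda>\<omega>. G t \<omega> i) \<in> borel_measurable M" for t i
    by (rule measurable_from_subalg[OF sub GF])
  have gi[measurable]: "(\<lambda>\<omega>. g t \<omega> $ i) \<in> borel_measurable M" for t i by measurable
  have \<sigma>pos1: "AE \<omega> in M. \<sigma>2 t \<omega> $ i \<ge> 0" for t i
  proof -
    interpret S: sigma_finite_subalgebra M "F t" by (rule sfs)
    have "AE \<omega> in M. 0 \<le> real_cond_exp M (F t) (\<lambda>\<omega>. (g t \<omega> $ i - Df (\<theta> t \<omega>) $ i)\<^sup>2) \<omega>"
      by (rule S.real_cond_exp_pos) auto
    then show ?thesis using sigma_var[of t i] unfolding F_def by eventually_elim simp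
  qed
  have \<sigma>pos: "AE \<omega> in M. \<forall>t i. \<sigma>2 t \<omega> $ i \<ge> 0"
    using \<sigma>pos1 by (simp add: AE_all_countable)
  have Gb: "AE \<omega> in M. \<forall>t i. 0 \<le> G t \<omega> i \<and> G t \<omega> i \<le> 1"
    using \<sigma>pos by eventually_elim (auto simp: G_def vadapt_bounds)
  have lowf: "f x - (norm (Df x))\<^sup>2 / (2 * \<mu>) \<le> f y" for x y by (rule sc_lower[OF grad sconv mu_pos])
  have bdd: "bdd_below (range f)" using lowf[of 0] by (intro bdd_belowI2) blast
  have fge: "fstar \<le> f x" for x unfolding fstar by (rule cINF_lower[OF bdd]) simp
  have PL: "f x - (norm (Df x))\<^sup>2 / (2 * \<mu>) \<le> fstar" for x
    unfolding fstar by (rule cINF_greatest) (auto intro: lowf)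
  define Af where "Af = \<bar>f 0 - fstar\<bar> + (norm (Df 0))\<^sup>2"
  have fup: "\<bar>f y - fstar\<bar> \<le> Af + (L + 1) * (norm y)\<^sup>2" for y
  proof -
    have "f y \<le> f 0 + Df 0 \<bullet> (y - 0) + L / 2 * (norm (y - 0))\<^sup>2" by (rule descent[OF grad smooth])
    moreover have "Df 0 \<bullet> y \<le> norm (Df 0) * norm y" by (rule norm_cauchy_schwarz)
    moreover have "norm (Df 0) * norm y \<le> (norm (Df 0))\<^sup>2 + (norm y)\<^sup>2"
      using abs_mul_le[of "norm (Df 0)" "norm y"] by simp
    moreover have "L / 2 * (norm y)\<^sup>2 \<le> L * (norm y)\<^sup>2" using L_pos by simp
    moreover have "f 0 - fstar \<le> \<bar>f 0 - fstar\<bar>" by simp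
    moreover have "\<bar>f y - fstar\<bar> = f y - fstar" using fge[of y] by simp
    ultimately show ?thesis unfolding Af_def by (simp add: algebra_simps)
  qed
  have \<theta>sq: "integrable M (\<lambda>\<omega>. (norm (\<theta> t \<omega>))\<^sup>2)" for t
  proof (induction t)
    case 0
    then show ?case using init by simp
  next
    case (Suc t)
    have gsq: "integrable M (\<lambda>\<omega>. \<Sum>i\<in>UNIV. (g t \<omega> $ i)\<^sup>2)"
      by (intro Bochner_Integration.integrable_sum g_sq_int)
    show ?case
    proof (rule Bochner_Integration.integrable_bound)
      show "integrable M (\<lambda>\<omega>. 2 * (norm (\<theta> t \<omega>))\<^sup>2 + 2 * (1/L)\<^sup>2 * (\<Sum>i\<in>UNIV. (g t \<omega> $ i)\<^sup>2))"
        using Suc gsq by (intro Bochner_Integration.integrable_add integrable_mult_right)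
      show "(\<lambda>\<omega>. (norm (\<theta> (Suc t) \<omega>))\<^sup>2) \<in> borel_measurable M" by measurable
      show "AE \<omega> in M. norm ((norm (\<theta> (Suc t) \<omega>))\<^sup>2) \<le>
          norm (2 * (norm (\<theta> t \<omega>))\<^sup>2 + 2 * (1/L)\<^sup>2 * (\<Sum>i\<in>UNIV. (g t \<omega> $ i)\<^sup>2))"
        using Gb
      proof eventually_elim
        case (elim \<omega>)
        have "(norm (v t \<omega>))\<^sup>2 \<le> (\<Sum>i\<in>UNIV. (g t \<omega> $ i)\<^sup>2)"
          unfolding norm_sq_vec v_def using elim by (auto intro!: sum_mono G_sq_le)
        moreover have "(norm (\<theta> (Suc t) \<omega>))\<^sup>2 \<le> 2 * (norm (\<theta> t \<omega>))\<^sup>2 + 2 * (norm ((1/L) *\<^sub>R v t \<omega>))\<^sup>2"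
          unfolding step' by (rule norm_diff_sq_le)
        moreover have "(norm ((1/L) *\<^sub>R v t \<omega>))\<^sup>2 = (1/L)\<^sup>2 * (norm (v t \<omega>))\<^sup>2"
          using L_pos by (simp add: power_divide)
        moreover have "0 \<le> (\<Sum>i\<in>UNIV. (g t \<omega> $ i)\<^sup>2)" by (simp add: sum_nonneg)
        moreover have "(1/L)\<^sup>2 * (norm (v t \<omega>))\<^sup>2 \<le> (1/L)\<^sup>2 * (\<Sum>i\<in>UNIV. (g t \<omega> $ i)\<^sup>2)"
          using calculation(1) by (intro mult_left_mono) auto
        ultimately have A: "(norm (\<theta> (Suc t) \<omega>))\<^sup>2 \<le> 2 * (norm (\<theta> t \<omega>))\<^sup>2 + 2 * (1/L)\<^sup>2 * (\<Sum>i\<in>UNIV. (g t \<omega> $ i)\<^sup>2)"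
          by linarith
        have B: "norm ((norm (\<theta> (Suc t) \<omega>))\<^sup>2) = (norm (\<theta> (Suc t) \<omega>))\<^sup>2" by simp
        have C: "2 * (norm (\<theta> t \<omega>))\<^sup>2 + 2 * (1/L)\<^sup>2 * (\<Sum>i\<in>UNIV. (g t \<omega> $ i)\<^sup>2) \<le>
            norm (2 * (norm (\<theta> t \<omega>))\<^sup>2 + 2 * (1/L)\<^sup>2 * (\<Sum>i\<in>UNIV. (g t \<omega> $ i)\<^sup>2))"
          unfolding real_norm_def by (rule abs_ge_self)
        show ?case using A B C by linarith
      qed
    qed
  qed
  have Dsq: "integrable M (\<lambda>\<omega>. (norm (D t \<omega>))\<^sup>2)" for t
  proof (rule Bochner_Integration.integrable_bound)
    show "integrable M (\<lambda>\<omega>. 2 * (norm (Df 0))\<^sup>2 + 2 * L\<^sup>2 * (norm (\<theta> t \<omega>))\<^sup>2)"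
      using \<theta>sq[of t] by (intro Bochner_Integration.integrable_add integrable_mult_right) auto
    show "(\<lambda>\<omega>. (norm (D t \<omega>))\<^sup>2) \<in> borel_measurable M" by measurable
    show "AE \<omega> in M. norm ((norm (D t \<omega>))\<^sup>2) \<le> norm (2 * (norm (Df 0))\<^sup>2 + 2 * L\<^sup>2 * (norm (\<theta> t \<omega>))\<^sup>2)"
    proof (intro AE_I2)
      fix \<omega>
      have "norm (D t \<omega>) \<le> norm (Df 0) + L * norm (\<theta> t \<omega>)"
        using smooth[of "\<theta> t \<omega>" 0] norm_triangle_ineq2[of "Df (\<theta> t \<omega>)" "Df 0"] unfolding D_def by simp
      then have "(norm (D t \<omega>))\<^sup>2 \<le> 2 * (norm (Df 0))\<^sup>2 + 2 * (L * norm (\<theta> t \<omega>))\<^sup>2"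
        by (intro sq_le_2) auto
      then show "norm ((norm (D t \<omega>))\<^sup>2) \<le> norm (2 * (norm (Df 0))\<^sup>2 + 2 * L\<^sup>2 * (norm (\<theta> t \<omega>))\<^sup>2)"
        by (simp add: power_mult_distrib)
    qed
  qed
  have Disq: "integrable M (\<lambda>\<omega>. (D t \<omega> $ i)\<^sup>2)" for t i
  proof (rule Bochner_Integration.integrable_bound[OF Dsq[of t]])
    show "(\<lambda>\<omega>. (D t \<omega> $ i)\<^sup>2) \<in> borel_measurable M" by measurable
    show "AE \<omega> in M. norm ((D t \<omega> $ i)\<^sup>2) \<le> norm ((norm (D t \<omega>))\<^sup>2)"
    proof (intro AE_I2)
      fix \<omega>
      have "\<bar>D t \<omega> $ i\<bar>\<^sup>2 \<le> (norm (D t \<omega>))\<^sup>2"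
        by (rule power_mono[OF component_le_norm_cart]) simp
      then show "norm ((D t \<omega> $ i)\<^sup>2) \<le> norm ((norm (D t \<omega>))\<^sup>2)" by simp
    qed
  qed
  have fint: "integrable M (\<lambda>\<omega>. f (\<theta> t \<omega>) - fstar)" for t
  proof (rule Bochner_Integration.integrable_bound)
    show "integrable M (\<lambda>\<omega>. Af + (L + 1) * (norm (\<theta> t \<omega>))\<^sup>2)"
      using \<theta>sq[of t] by (intro Bochner_Integration.integrable_add integrable_mult_right) auto
    show "(\<lambda>\<omega>. f (\<theta> t \<omega>) - fstar) \<in> borel_measurable M" by measurable
    show "AE \<omega> in M. norm (f (\<theta> t \<omega>) - fstar) \<le> norm (Af + (L + 1) * (norm (\<theta> t \<omega>))\<^sup>2)"
    proof (intro AE_I2)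
      fix \<omega>
      have "Af + (L + 1) * (norm (\<theta> t \<omega>))\<^sup>2 \<le> norm (Af + (L + 1) * (norm (\<theta> t \<omega>))\<^sup>2)"
        unfolding real_norm_def by (rule abs_ge_self)
      then show "norm (f (\<theta> t \<omega>) - fstar) \<le> norm (Af + (L + 1) * (norm (\<theta> t \<omega>))\<^sup>2)"
        using fup[of "\<theta> t \<omega>"] unfolding real_norm_def by linarith
    qed
  qed
  have fint': "integrable M (\<lambda>\<omega>. f (\<theta> t \<omega>))" for t
  proof -
    have "integrable M (\<lambda>\<omega>. (f (\<theta> t \<omega>) - fstar) + fstar)"
      using fint[of t] by (intro Bochner_Integration.integrable_add) auto
    then show ?thesis by simp
  qed
  define e where "e t = (\<integral>\<omega>. f (\<theta> t \<omega>) - fstar \<partial>M)" for t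
  have e_nonneg: "e t \<ge> 0" for t
    unfolding e_def using fge by (intro integral_nonneg_AE AE_I2) simp
  have GDint: "integrable M (\<lambda>\<omega>. G t \<omega> i * (D t \<omega> $ i)\<^sup>2)" for t i
  proof (rule Bochner_Integration.integrable_bound[OF Disq[of t i]])
    show "(\<lambda>\<omega>. G t \<omega> i * (D t \<omega> $ i)\<^sup>2) \<in> borel_measurable M" by measurable
    show "AE \<omega> in M. norm (G t \<omega> i * (D t \<omega> $ i)\<^sup>2) \<le> norm ((D t \<omega> $ i)\<^sup>2)"
      using Gb
    proof eventually_elim
      case (elim \<omega>)
      then have "\<bar>G t \<omega> i\<bar> * (D t \<omega> $ i)\<^sup>2 \<le> 1 * (D t \<omega> $ i)\<^sup>2"
        by (intro mult_right_mono) auto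
      then show ?case by (simp add: abs_mult)
    qed
  qed
  have E1: "(\<integral>\<omega>. D t \<omega> $ i * G t \<omega> i * g t \<omega> $ i \<partial>M) = (\<integral>\<omega>. G t \<omega> i * (D t \<omega> $ i)\<^sup>2 \<partial>M)"
   and int1: "integrable M (\<lambda>\<omega>. D t \<omega> $ i * G t \<omega> i * g t \<omega> $ i)" for t i
  proof -
    interpret S: sigma_finite_subalgebra M "F t" by (rule sfs)
    show int: "integrable M (\<lambda>\<omega>. D t \<omega> $ i * G t \<omega> i * g t \<omega> $ i)"
    proof (rule Bochner_Integration.integrable_bound)
      show "integrable M (\<lambda>\<omega>. (D t \<omega> $ i)\<^sup>2 + (g t \<omega> $ i)\<^sup>2)"
        using Disq g_sq_int by (intro Bochner_Integration.integrable_add)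
      show "(\<lambda>\<omega>. D t \<omega> $ i * G t \<omega> i * g t \<omega> $ i) \<in> borel_measurable M" by measurable
      show "AE \<omega> in M. norm (D t \<omega> $ i * G t \<omega> i * g t \<omega> $ i) \<le> norm ((D t \<omega> $ i)\<^sup>2 + (g t \<omega> $ i)\<^sup>2)"
        using Gb
      proof eventually_elim
        case (elim \<omega>)
        have "\<bar>D t \<omega> $ i * G t \<omega> i * g t \<omega> $ i\<bar> = \<bar>G t \<omega> i\<bar> * \<bar>D t \<omega> $ i * g t \<omega> $ i\<bar>"
          by (simp add: abs_mult)
        also have "\<dots> \<le> 1 * \<bar>D t \<omega> $ i * g t \<omega> $ i\<bar>" using elim by (intro mult_right_mono) auto
        also have "\<dots> \<le> (D t \<omega> $ i)\<^sup>2 + (g t \<omega> $ i)\<^sup>2" using abs_mul_le by simp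
        finally show ?case by simp
      qed
    qed
    have mF: "(\<lambda>\<omega>. D t \<omega> $ i * G t \<omega> i) \<in> borel_measurable (F t)" using DF GF by measurable
    have "(\<integral>\<omega>. (D t \<omega> $ i * G t \<omega> i) * real_cond_exp M (F t) (\<lambda>\<omega>. g t \<omega> $ i) \<omega> \<partial>M)
        = (\<integral>\<omega>. (D t \<omega> $ i * G t \<omega> i) * g t \<omega> $ i \<partial>M)"
      by (rule S.real_cond_exp_intg(2)[OF int mF gi])
    moreover have "(\<integral>\<omega>. (D t \<omega> $ i * G t \<omega> i) * real_cond_exp M (F t) (\<lambda>\<omega>. g t \<omega> $ i) \<omega> \<partial>M)
        = (\<integral>\<omega>. G t \<omega> i * (D t \<omega> $ i)\<^sup>2 \<partial>M)"
    proof (rule integral_cong_AE)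
      show "(\<lambda>\<omega>. (D t \<omega> $ i * G t \<omega> i) * real_cond_exp M (F t) (\<lambda>\<omega>. g t \<omega> $ i) \<omega>) \<in> borel_measurable M"
        by measurable
      show "(\<lambda>\<omega>. G t \<omega> i * (D t \<omega> $ i)\<^sup>2) \<in> borel_measurable M" by measurable
      show "AE \<omega> in M. (D t \<omega> $ i * G t \<omega> i) * real_cond_exp M (F t) (\<lambda>\<omega>. g t \<omega> $ i) \<omega> = G t \<omega> i * (D t \<omega> $ i)\<^sup>2"
        using unbiased[of t i] unfolding F_def D_def by eventually_elim (simp add: power2_eq_square)
    qed
    ultimately show "(\<integral>\<omega>. D t \<omega> $ i * G t \<omega> i * g t \<omega> $ i \<partial>M) = (\<integral>\<omega>. G t \<omega> i * (D t \<omega> $ i)\<^sup>2 \<partial>M)"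
      by simp
  qed
  have E2: "(\<integral>\<omega>. (G t \<omega> i * g t \<omega> $ i)\<^sup>2 \<partial>M) = (\<integral>\<omega>. G t \<omega> i * (D t \<omega> $ i)\<^sup>2 \<partial>M)"
   and int2: "integrable M (\<lambda>\<omega>. (G t \<omega> i * g t \<omega> $ i)\<^sup>2)" for t i
  proof -
    interpret S: sigma_finite_subalgebra M "F t" by (rule sfs)
    define a where "a \<omega> = (G t \<omega> i)\<^sup>2 * (g t \<omega> $ i - D t \<omega> $ i)\<^sup>2" for \<omega>
    define b where "b \<omega> = ((G t \<omega> i)\<^sup>2 * D t \<omega> $ i) * g t \<omega> $ i" for \<omega>
    define c where "c \<omega> = (G t \<omega> i)\<^sup>2 * (D t \<omega> $ i)\<^sup>2" for \<omega>
    define d where "d \<omega> = (G t \<omega> i)\<^sup>2 * \<sigma>2 t \<omega> $ i" for \<omega>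
    have ia: "integrable M a"
    proof (rule Bochner_Integration.integrable_bound)
      show "integrable M (\<lambda>\<omega>. 2 * (g t \<omega> $ i)\<^sup>2 + 2 * (D t \<omega> $ i)\<^sup>2)"
        using Disq g_sq_int by (intro Bochner_Integration.integrable_add integrable_mult_right)
      show "a \<in> borel_measurable M" unfolding a_def by measurable
      show "AE \<omega> in M. norm (a \<omega>) \<le> norm (2 * (g t \<omega> $ i)\<^sup>2 + 2 * (D t \<omega> $ i)\<^sup>2)"
        using Gb
      proof eventually_elim
        case (elim \<omega>)
        have "\<bar>g t \<omega> $ i - D t \<omega> $ i\<bar>\<^sup>2 \<le> 2 * \<bar>g t \<omega> $ i\<bar>\<^sup>2 + 2 * \<bar>D t \<omega> $ i\<bar>\<^sup>2"
          by (rule sq_le_2) (auto intro: abs_triangle_ineq4)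
        moreover have "(G t \<omega> i)\<^sup>2 * (g t \<omega> $ i - D t \<omega> $ i)\<^sup>2 \<le> 1 * (g t \<omega> $ i - D t \<omega> $ i)\<^sup>2"
          using elim G_sq_le(2)[of "G t \<omega> i"] by (intro mult_right_mono) auto
        ultimately show ?case unfolding a_def by simp
      qed
    qed
    have ib: "integrable M b"
    proof (rule Bochner_Integration.integrable_bound)
      show "integrable M (\<lambda>\<omega>. (D t \<omega> $ i)\<^sup>2 + (g t \<omega> $ i)\<^sup>2)"
        using Disq g_sq_int by (intro Bochner_Integration.integrable_add)
      show "b \<in> borel_measurable M" unfolding b_def by measurable
      show "AE \<omega> in M. norm (b \<omega>) \<le> norm ((D t \<omega> $ i)\<^sup>2 + (g t \<omega> $ i)\<^sup>2)"
        using Gb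
      proof eventually_elim
        case (elim \<omega>)
        have "\<bar>b \<omega>\<bar> = (G t \<omega> i)\<^sup>2 * \<bar>D t \<omega> $ i * g t \<omega> $ i\<bar>"
          unfolding b_def by (simp add: abs_mult)
        also have "\<dots> \<le> 1 * \<bar>D t \<omega> $ i * g t \<omega> $ i\<bar>"
          using elim G_sq_le(2)[of "G t \<omega> i"] by (intro mult_right_mono) auto
        also have "\<dots> \<le> (D t \<omega> $ i)\<^sup>2 + (g t \<omega> $ i)\<^sup>2" using abs_mul_le by simp
        finally show ?case by simp
      qed
    qed
    have ic: "integrable M c"
    proof (rule Bochner_Integration.integrable_bound[OF Disq[of t i]])
      show "c \<in> borel_measurable M" unfolding c_def by measurable
      show "AE \<omega> in M. norm (c \<omega>) \<le> norm ((D t \<omega> $ i)\<^sup>2)"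
        using Gb
      proof eventually_elim
        case (elim \<omega>)
        have "(G t \<omega> i)\<^sup>2 * (D t \<omega> $ i)\<^sup>2 \<le> 1 * (D t \<omega> $ i)\<^sup>2"
          using elim G_sq_le(2)[of "G t \<omega> i"] by (intro mult_right_mono) auto
        then show ?case unfolding c_def by simp
      qed
    qed
    have GF2: "(\<lambda>\<omega>. (G t \<omega> i)\<^sup>2) \<in> borel_measurable (F t)" using GF by measurable
    have ia': "integrable M (\<lambda>\<omega>. (G t \<omega> i)\<^sup>2 * (g t \<omega> $ i - D t \<omega> $ i)\<^sup>2)"
      using ia unfolding a_def .
    have gdm: "(\<lambda>\<omega>. (g t \<omega> $ i - D t \<omega> $ i)\<^sup>2) \<in> borel_measurable M" by measurable
    have ad1: "integrable M (\<lambda>\<omega>. (G t \<omega> i)\<^sup>2 * real_cond_exp M (F t) (\<lambda>\<omega>. (g t \<omega> $ i - D t \<omega> $ i)\<^sup>2) \<omega>)"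
      by (rule S.real_cond_exp_intg(1)[OF ia' GF2 gdm])
    have ad2: "(\<integral>\<omega>. (G t \<omega> i)\<^sup>2 * real_cond_exp M (F t) (\<lambda>\<omega>. (g t \<omega> $ i - D t \<omega> $ i)\<^sup>2) \<omega> \<partial>M) = integral\<^sup>L M a"
      unfolding a_def by (rule S.real_cond_exp_intg(2)[OF ia' GF2 gdm])
    have ad3: "AE \<omega> in M. (G t \<omega> i)\<^sup>2 * real_cond_exp M (F t) (\<lambda>\<omega>. (g t \<omega> $ i - D t \<omega> $ i)\<^sup>2) \<omega> = d \<omega>"
      using sigma_var[of t i] unfolding F_def D_def d_def by eventually_elim simp
    have dm: "d \<in> borel_measurable M" unfolding d_def by measurable
    have m1: "(\<lambda>\<omega>. (G t \<omega> i)\<^sup>2 * real_cond_exp M (F t) (\<lambda>\<omega>. (g t \<omega> $ i - D t \<omega> $ i)\<^sup>2) \<omega>) \<in> borel_measurable M"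
      by measurable
    have id: "integrable M d"
      using ad1 integrable_cong_AE[OF m1 dm ad3] by simp
    have eqa: "integral\<^sup>L M a = integral\<^sup>L M d"
      using ad2 integral_cong_AE[OF m1 dm ad3] by simp
    have GDF: "(\<lambda>\<omega>. (G t \<omega> i)\<^sup>2 * D t \<omega> $ i) \<in> borel_measurable (F t)" using GF DF by measurable
    have ib': "integrable M (\<lambda>\<omega>. ((G t \<omega> i)\<^sup>2 * D t \<omega> $ i) * g t \<omega> $ i)" using ib unfolding b_def .
    have eqb0: "(\<integral>\<omega>. ((G t \<omega> i)\<^sup>2 * D t \<omega> $ i) * real_cond_exp M (F t) (\<lambda>\<omega>. g t \<omega> $ i) \<omega> \<partial>M) = integral\<^sup>L M b"
      unfolding b_def by (rule S.real_cond_exp_intg(2)[OF ib' GDF gi])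
    have eqb1: "(\<integral>\<omega>. ((G t \<omega> i)\<^sup>2 * D t \<omega> $ i) * real_cond_exp M (F t) (\<lambda>\<omega>. g t \<omega> $ i) \<omega> \<partial>M) = integral\<^sup>L M c"
    proof (rule integral_cong_AE)
      show "(\<lambda>\<omega>. ((G t \<omega> i)\<^sup>2 * D t \<omega> $ i) * real_cond_exp M (F t) (\<lambda>\<omega>. g t \<omega> $ i) \<omega>) \<in> borel_measurable M"
        by measurable
      show "c \<in> borel_measurable M" unfolding c_def by measurable
      show "AE \<omega> in M. ((G t \<omega> i)\<^sup>2 * D t \<omega> $ i) * real_cond_exp M (F t) (\<lambda>\<omega>. g t \<omega> $ i) \<omega> = c \<omega>"
        using unbiased[of t i] unfolding F_def D_def c_def by eventually_elim (simp add: power2_eq_square)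
    qed
    have pt: "(G t \<omega> i * g t \<omega> $ i)\<^sup>2 = a \<omega> + 2 * b \<omega> - c \<omega>" for \<omega>
      unfolding a_def b_def c_def by (simp add: power2_eq_square algebra_simps)
    have pt2: "G t \<omega> i * (D t \<omega> $ i)\<^sup>2 = d \<omega> + c \<omega>" for \<omega>
    proof -
      have "(G t \<omega> i)\<^sup>2 * ((D t \<omega> $ i)\<^sup>2 + \<sigma>2 t \<omega> $ i) = G t \<omega> i * (D t \<omega> $ i)\<^sup>2"
        unfolding G_def by (rule vadapt_id)
      then show ?thesis unfolding d_def c_def by (simp add: algebra_simps)
    qed
    have fun1: "(\<lambda>\<omega>. (G t \<omega> i * g t \<omega> $ i)\<^sup>2) = (\<lambda>\<omega>. a \<omega> + 2 * b \<omega> - c \<omega>)"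
      using pt by (intro ext)
    have fun2: "(\<lambda>\<omega>. G t \<omega> i * (D t \<omega> $ i)\<^sup>2) = (\<lambda>\<omega>. d \<omega> + c \<omega>)"
      using pt2 by (intro ext)
    show "integrable M (\<lambda>\<omega>. (G t \<omega> i * g t \<omega> $ i)\<^sup>2)"
      unfolding fun1 using ia ib ic by (intro Bochner_Integration.integrable_diff Bochner_Integration.integrable_add integrable_mult_right)
    have "(\<integral>\<omega>. (G t \<omega> i * g t \<omega> $ i)\<^sup>2 \<partial>M) = integral\<^sup>L M a + 2 * integral\<^sup>L M b - integral\<^sup>L M c"
      unfolding fun1 using ia ib ic by (simp add: Bochner_Integration.integral_diff Bochner_Integration.integral_add)
    also have "\<dots> = integral\<^sup>L M d + integral\<^sup>L M c" using eqa eqb0 eqb1 by simp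
    also have "\<dots> = (\<integral>\<omega>. G t \<omega> i * (D t \<omega> $ i)\<^sup>2 \<partial>M)"
      unfolding fun2 using id ic by (simp add: Bochner_Integration.integral_add)
    finally show "(\<integral>\<omega>. (G t \<omega> i * g t \<omega> $ i)\<^sup>2 \<partial>M) = (\<integral>\<omega>. G t \<omega> i * (D t \<omega> $ i)\<^sup>2 \<partial>M)" .
  qed
  have desc_pt: "f (\<theta> (Suc t) \<omega>) - fstar \<le> (f (\<theta> t \<omega>) - fstar)
      - (1/L) * (\<Sum>i\<in>UNIV. D t \<omega> $ i * G t \<omega> i * g t \<omega> $ i)
      + 1/(2*L) * (\<Sum>i\<in>UNIV. (G t \<omega> i * g t \<omega> $ i)\<^sup>2)" for t \<omega>
  proof -
    have d0: "f (\<theta> (Suc t) \<omega>) \<le> f (\<theta> t \<omega>) + Df (\<theta> t \<omega>) \<bullet> (\<theta> (Suc t) \<omega> - \<theta> t \<omega>)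
        + L/2 * (norm (\<theta> (Suc t) \<omega> - \<theta> t \<omega>))\<^sup>2"
      by (rule descent[OF grad smooth])
    have dif: "\<theta> (Suc t) \<omega> - \<theta> t \<omega> = - ((1/L) *\<^sub>R v t \<omega>)" by (simp add: step')
    have inn: "Df (\<theta> t \<omega>) \<bullet> (- ((1/L) *\<^sub>R v t \<omega>)) = - ((1/L) * (\<Sum>i\<in>UNIV. D t \<omega> $ i * G t \<omega> i * g t \<omega> $ i))"
      by (simp add: inner_vec_def v_def D_def mult.assoc sum_negf sum_divide_distrib)
    have nv: "(norm (v t \<omega>))\<^sup>2 = (\<Sum>i\<in>UNIV. (G t \<omega> i * g t \<omega> $ i)\<^sup>2)"
      unfolding norm_sq_vec v_def by simp
    have nrm: "L/2 * (norm (- ((1/L) *\<^sub>R v t \<omega>)))\<^sup>2 = 1/(2*L) * (\<Sum>i\<in>UNIV. (G t \<omega> i * g t \<omega> $ i)\<^sup>2)"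
    proof -
      have "(norm (- ((1/L) *\<^sub>R v t \<omega>)))\<^sup>2 = (1/L)\<^sup>2 * (norm (v t \<omega>))\<^sup>2"
        using L_pos by (simp add: power_divide)
      then show ?thesis unfolding nv using L_pos by (simp add: power2_eq_square field_simps)
    qed
    show ?thesis using d0 unfolding dif inn nrm by linarith
  qed
  have sint: "integrable M (\<lambda>\<omega>. (f (\<theta> t \<omega>) - fstar)
      - (1/L) * (\<Sum>i\<in>UNIV. D t \<omega> $ i * G t \<omega> i * g t \<omega> $ i)
      + 1/(2*L) * (\<Sum>i\<in>UNIV. (G t \<omega> i * g t \<omega> $ i)\<^sup>2))" for t
    by (rule fint int1 int2 Bochner_Integration.integrable_add Bochner_Integration.integrable_diff integrable_mult_right
        Bochner_Integration.integrable_sum)+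
  have rec0: "e (Suc t) \<le> e t - 1/(2*L) * (\<Sum>i\<in>UNIV. \<integral>\<omega>. G t \<omega> i * (D t \<omega> $ i)\<^sup>2 \<partial>M)" for t
  proof -
    have "e (Suc t) \<le> (\<integral>\<omega>. (f (\<theta> t \<omega>) - fstar)
      - (1/L) * (\<Sum>i\<in>UNIV. D t \<omega> $ i * G t \<omega> i * g t \<omega> $ i)
      + 1/(2*L) * (\<Sum>i\<in>UNIV. (G t \<omega> i * g t \<omega> $ i)\<^sup>2) \<partial>M)"
      unfolding e_def by (rule integral_mono[OF fint sint desc_pt])
    also have "\<dots> = e t - (1/L) * (\<Sum>i\<in>UNIV. \<integral>\<omega>. D t \<omega> $ i * G t \<omega> i * g t \<omega> $ i \<partial>M)
        + 1/(2*L) * (\<Sum>i\<in>UNIV. \<integral>\<omega>. (G t \<omega> i * g t \<omega> $ i)\<^sup>2 \<partial>M)"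
      unfolding e_def using fint int1 int2
      by (simp add: Bochner_Integration.integral_add Bochner_Integration.integral_diff
          Bochner_Integration.integral_sum Bochner_Integration.integrable_sum Bochner_Integration.integrable_diff)
    also have "\<dots> = e t - 1/(2*L) * (\<Sum>i\<in>UNIV. \<integral>\<omega>. G t \<omega> i * (D t \<omega> $ i)\<^sup>2 \<partial>M)"
      unfolding E1 E2 using L_pos by (simp add: field_simps)
    finally show ?thesis .
  qed
  have lowS: "2 * l * \<mu> * e t - l\<^sup>2 * Mv \<le> (\<Sum>i\<in>UNIV. \<integral>\<omega>. G t \<omega> i * (D t \<omega> $ i)\<^sup>2 \<partial>M)"
    if l0: "0 \<le> l" and l1: "l \<le> 1/(1+cv)" for t l
  proof -
    have lcv: "l * (1 + cv) \<le> 1" using l1 cv_pos by (simp add: le_divide_eq)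
    have "(\<Sum>i\<in>UNIV. \<integral>\<omega>. G t \<omega> i * (D t \<omega> $ i)\<^sup>2 \<partial>M) = (\<integral>\<omega>. (\<Sum>i\<in>UNIV. G t \<omega> i * (D t \<omega> $ i)\<^sup>2) \<partial>M)"
      using GDint by (simp add: Bochner_Integration.integral_sum)
    moreover have "(\<integral>\<omega>. 2 * l * \<mu> * (f (\<theta> t \<omega>) - fstar) - l\<^sup>2 * Mv \<partial>M)
        \<le> (\<integral>\<omega>. (\<Sum>i\<in>UNIV. G t \<omega> i * (D t \<omega> $ i)\<^sup>2) \<partial>M)"
    proof (rule integral_mono_AE)
      show "integrable M (\<lambda>\<omega>. 2 * l * \<mu> * (f (\<theta> t \<omega>) - fstar) - l\<^sup>2 * Mv)"
        using fint fint' by (intro Bochner_Integration.integrable_diff integrable_mult_right) auto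
      show "integrable M (\<lambda>\<omega>. \<Sum>i\<in>UNIV. G t \<omega> i * (D t \<omega> $ i)\<^sup>2)"
        using GDint by (intro Bochner_Integration.integrable_sum) auto
      show "AE \<omega> in M. 2 * l * \<mu> * (f (\<theta> t \<omega>) - fstar) - l\<^sup>2 * Mv \<le> (\<Sum>i\<in>UNIV. G t \<omega> i * (D t \<omega> $ i)\<^sup>2)"
        using \<sigma>pos var_bound[of t]
      proof eventually_elim
        case (elim \<omega>)
        define N where "N = (\<Sum>i\<in>UNIV. (D t \<omega> $ i)\<^sup>2)"
        define S where "S = (\<Sum>i\<in>UNIV. \<sigma>2 t \<omega> $ i)"
        have N0: "N \<ge> 0" unfolding N_def by (simp add: sum_nonneg)
        have NN: "N = (norm (D t \<omega>))\<^sup>2" unfolding N_def norm_sq_vec ..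
        have h1: "(\<Sum>i\<in>UNIV. 2 * l * (D t \<omega> $ i)\<^sup>2 - l\<^sup>2 * ((D t \<omega> $ i)\<^sup>2 + \<sigma>2 t \<omega> $ i))
            \<le> (\<Sum>i\<in>UNIV. G t \<omega> i * (D t \<omega> $ i)\<^sup>2)"
          using elim unfolding G_def by (intro sum_mono vadapt_lower) auto
        have h2: "(\<Sum>i\<in>UNIV. 2 * l * (D t \<omega> $ i)\<^sup>2 - l\<^sup>2 * ((D t \<omega> $ i)\<^sup>2 + \<sigma>2 t \<omega> $ i))
            = 2 * l * N - l\<^sup>2 * N - l\<^sup>2 * S"
          unfolding N_def S_def
          by (simp add: sum_subtractf sum.distrib sum_distrib_left algebra_simps)
        have h3: "S \<le> cv * N + Mv" using elim unfolding S_def NN D_def by simp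
        have h4: "l\<^sup>2 * S \<le> l\<^sup>2 * (cv * N + Mv)" using h3 by (intro mult_left_mono) auto
        have h5: "l\<^sup>2 * N + l\<^sup>2 * (cv * N) \<le> l * N"
        proof -
          have "l\<^sup>2 * N + l\<^sup>2 * (cv * N) = l * (l * (1 + cv)) * N" by (simp add: power2_eq_square algebra_simps)
          also have "\<dots> \<le> l * 1 * N" using lcv l0 N0 by (intro mult_right_mono mult_left_mono) auto
          finally show ?thesis by simp
        qed
        have h6: "2 * \<mu> * (f (\<theta> t \<omega>) - fstar) \<le> N"
          using PL[of "\<theta> t \<omega>"] mu_pos unfolding NN D_def by (simp add: field_simps)
        have h7: "l * (2 * \<mu> * (f (\<theta> t \<omega>) - fstar)) \<le> l * N" using h6 l0 by (rule mult_left_mono)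
        have h8: "l\<^sup>2 * (cv * N + Mv) = l\<^sup>2 * (cv * N) + l\<^sup>2 * Mv" by (simp add: algebra_simps)
        have h9: "2 * l * \<mu> * (f (\<theta> t \<omega>) - fstar) = l * (2 * \<mu> * (f (\<theta> t \<omega>) - fstar))" by simp
        have h10: "2 * l * N = 2 * (l * N)" by simp
        show ?case using h1 h2 h4 h5 h7 h8 h9 h10 by linarith
      qed
    qed
    moreover have "(\<integral>\<omega>. 2 * l * \<mu> * (f (\<theta> t \<omega>) - fstar) - l\<^sup>2 * Mv \<partial>M) = 2 * l * \<mu> * e t - l\<^sup>2 * Mv"
      unfolding e_def using fint fint' by (simp add: Bochner_Integration.integral_diff P.prob_space)
    ultimately show ?thesis by simp
  qed
  have rec: "e (Suc t) \<le> (1 - \<mu> / L * l) * e t + Mv / (2 * L) * l\<^sup>2"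
    if "0 \<le> l" "l \<le> 1/(1+cv)" for t l
  proof -
    have "1/(2*L) * (2 * l * \<mu> * e t - l\<^sup>2 * Mv) \<le> 1/(2*L) * (\<Sum>i\<in>UNIV. \<integral>\<omega>. G t \<omega> i * (D t \<omega> $ i)\<^sup>2 \<partial>M)"
      using lowS[OF that, of t] L_pos by (intro mult_left_mono) auto
    moreover have "e t - 1/(2*L) * (2 * l * \<mu> * e t - l\<^sup>2 * Mv) = (1 - \<mu> / L * l) * e t + Mv / (2 * L) * l\<^sup>2"
      using L_pos by (simp add: field_simps)
    ultimately show ?thesis using rec0[of t] by linarith
  qed
  have "e \<in> O(\<lambda>t. 1 / real t)"
  proof (rule rec_bound[of e "\<mu> / L" "Mv / (2 * L)" "1 / (1 + cv)"])
    show "\<And>t. 0 \<le> e t" by (rule e_nonneg)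
    show "0 < \<mu> / L" using mu_pos L_pos by simp
    show "0 \<le> Mv / (2 * L)" using Mv_pos L_pos by simp
    show "0 < 1 / (1 + cv)" using cv_pos by simp
    show "\<And>t l. 0 \<le> l \<Longrightarrow> l \<le> 1 / (1 + cv) \<Longrightarrow> e (Suc t) \<le> (1 - \<mu> / L * l) * e t + Mv / (2 * L) * l\<^sup>2"
      by (rule rec)
  qed
  moreover have "e = (\<lambda>t. LINT \<omega>|M. f (\<theta> t \<omega>) - fstar)" by (simp add: e_def fun_eq_iff)
  ultimately show ?thesis using fint by simp
qed


end
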